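(* Assume that $(\mathcal{H}_T)$, $(\mathcal{H}_\varphi)$, $(\mathcal{H}_K)$ and $(\mathcal{H}_0)$ hold and $m\in V^*$. Fix $a\in A$ and define the variational selection $S_a\colon C\to 2^C$ by letting $S_a(w)$ be the set of all $u\in K(w)$ such that $\langle T(a,u),v-u\rangle+\varphi(v)-\varphi(u)\ge\langle m,v-u\rangle$ for all $v\in K(w)$. Then the graph of $S_a$ is sequentially weakly closed: if $\{w_n\},\{u_n\}\subset C$, $u_n\in S_a(w_n)$, $w_n\rightharpoonup w$ and $u_n\rightharpoonup u$ weakly in $V$, then $u\in S_a(w)$. Moreover, the set $S_a(C)=\bigcup_{w\in C}S_a(w)$ is bounded in $V$.
   Context: Let $V$ be a real reflexive Banach space with dual $V^*$ and duality pairing $\langle\cdot,\cdot\rangle$, let $C\subseteq V$ be nonempty, closed and convex, let $B$ be a real Banach space and $A\subseteq B$ a nonempty set of parameters, and let $T\colon B\times V\to V^*$, $\varphi\colon V\to\mathbb{R}\cup\{+\infty\}$, $K\colon C\to 2^C$, $m\in V^*$ be given. Hypothesis $(\mathcal{H}_T)$: $T$ is bounded (maps bounded sets to bounded sets); for each $u\in V$ the map $T(\cdot,u)\colon B\to V^*$ is linear; for each $a\in A$ the map $T(a,\cdot)\colon V\to V^*$ is monotone and continuous. Hypothesis $(\mathcal{H}_\varphi)$: $\varphi$ is proper, convex and lower semicontinuous, and $C\subseteq\operatorname{int}(\operatorname{dom}\varphi)$. Hypothesis $(\mathcal{H}_K)$: for every $u\in C$ the set $K(u)\subseteq C$ is nonempty,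 closed and convex, and (i) for any sequence $\{x_n\}\subset C$ with $x_n\rightharpoonup x$ weakly and any $y\in K(x)$ there is a sequence $\{y_n\}\subset C$ with $y_n\in K(x_n)$ and $y_n\to y$ strongly; (ii) for any sequences $\{x_n\},\{y_n\}\subset C$ with $y_n\in K(x_n)$, $x_n\rightharpoonup x$ and $y_n\rightharpoonup y$, one has $y\in K(x)$. Hypothesis $(\mathcal{H}_0)$: there is a bounded set $C_0\subseteq V$ with $K(u)\cap C_0\neq\emptyset$ for every $u\in C$, and a function $h\colon[0,\infty)\to\mathbb{R}$ with $h(t)\to+\infty$ as $t\to+\infty$ such that $\langle T(a,w),w-v_0\rangle+\varphi(w)-\varphi(v_0)\ge h(\|w\|_V)\|w\|_V$ for all $v_0\in C_0$, $a\in A$, $w\in C$. *)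

theory Defs
  imports "HOL-Analysis.Analysis"
begin

(* dual space V* = bounded linear functionals; pairing = blinfun_apply *)

definition reflexive_space :: "'v::banach itself \<Rightarrow> bool" where
  "reflexive_space _ \<longleftrightarrow>
     (\<forall>\<Phi> :: ('v \<Rightarrow>\<^sub>L real) \<Rightarrow>\<^sub>L real. \<exists>v::'v. \<forall>f. blinfun_apply \<Phi> f = blinfun_apply f v)"

definition weak_conv :: "(nat \<Rightarrow> 'v::real_normed_vector) \<Rightarrow> 'v \<Rightarrow> bool" where
  "weak_conv xs x \<longleftrightarrow> (\<forall>f :: 'v \<Rightarrow>\<^sub>L real. (\<lambda>n. blinfun_apply f (xs n)) \<longlonglongrightarrow> blinfun_apply f x)"

definition bounded_operator :: "('b::real_normed_vector \<Rightarrow> 'v::real_normed_vector \<Rightarrow> 'w::real_normed_vector) \<Rightarrow> bool" where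
  "bounded_operator T \<longleftrightarrow>
     (\<forall>S :: ('b \<times> 'v) set. bounded S \<longrightarrow> bounded ((\<lambda>(a, u). T a u) ` S))"

definition monotone_op :: "('v::real_normed_vector \<Rightarrow> ('v \<Rightarrow>\<^sub>L real)) \<Rightarrow> bool" where
  "monotone_op F \<longleftrightarrow> (\<forall>u v. blinfun_apply (F u - F v) (u - v) \<ge> 0)"

definition proper_fun :: "('v \<Rightarrow> ereal) \<Rightarrow> bool" where
  "proper_fun \<phi> \<longleftrightarrow> (\<forall>x. \<phi> x \<noteq> -\<infinity>) \<and> (\<exists>x. \<phi> x \<noteq> \<infinity>)"

definition convex_efun :: "('v::real_vector \<Rightarrow> ereal) \<Rightarrow> bool" where
  "convex_efun \<phi> \<longleftrightarrow> (\<forall>x y t. 0 \<le> t \<and> t \<le> 1 \<longrightarrow>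
     \<phi> (t *\<^sub>R x + (1 - t) *\<^sub>R y) \<le> ereal t * \<phi> x + ereal (1 - t) * \<phi> y)"

definition lsc_efun :: "('v::topological_space \<Rightarrow> ereal) \<Rightarrow> bool" where
  "lsc_efun \<phi> \<longleftrightarrow> (\<forall>c::real. closed {x. \<phi> x \<le> ereal c})"

definition edom :: "('v \<Rightarrow> ereal) \<Rightarrow> 'v set" where
  "edom \<phi> = {x. \<phi> x < \<infinity>}"

definition var_sel ::
  "('b \<Rightarrow> 'v::real_normed_vector \<Rightarrow> ('v \<Rightarrow>\<^sub>L real)) \<Rightarrow> ('v \<Rightarrow> ereal) \<Rightarrow> ('v \<Rightarrow> 'v set)
    \<Rightarrow> ('v \<Rightarrow>\<^sub>L real) \<Rightarrow> 'b \<Rightarrow> 'v \<Rightarrow> 'v set" where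
  "var_sel T \<phi> K m a w = {u \<in> K w. \<forall>v \<in> K w.
      ereal (blinfun_apply (T a u) (v - u)) + \<phi> v - \<phi> u \<ge> ereal (blinfun_apply m (v - u))}"

end

theory Submission
  imports Defs
begin


definition pgraph :: "('v::real_vector \<Rightarrow> real) \<Rightarrow> ('v \<times> real) set \<Rightarrow> bool" where
  "pgraph p G \<longleftrightarrow> (0,0) \<in> G \<and> (\<forall>x a y b. (x,a)\<in>G \<longrightarrow> (y,b)\<in>G \<longrightarrow> (x+y,a+b)\<in>G)
     \<and> (\<forall>x a c. (x,a)\<in>G \<longrightarrow> (c *\<^sub>R x, c*a)\<in>G)
     \<and> (\<forall>x a b. (x,a)\<in>G \<longrightarrow> (x,b)\<in>G \<longrightarrow> a=b) \<and> (\<forall>x a. (x,a)\<in>G \<longrightarrow> a \<le> p x)"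

lemma hb_step:
  fixes p :: "'v::real_vector \<Rightarrow> real"
  assumes sub: "\<And>x y. p (x + y) \<le> p x + p y"
    and hom: "\<And>s x. 0 \<le> s \<Longrightarrow> p (s *\<^sub>R x) = s * p x"
    and G: "pgraph p G"
  shows "\<exists>c. \<forall>x a t. (x,a)\<in>G \<longrightarrow> a + t*c \<le> p (x + t *\<^sub>R y)"
proof -
  define S where "S = {a - p (x - y) | x a. (x,a)\<in>G}"
  have key: "a1 - p (x1 - y) \<le> p (x2 + y) - a2" if "(x1,a1)\<in>G" "(x2,a2)\<in>G" for x1 a1 x2 a2
  proof -
    have "(x1+x2, a1+a2) \<in> G" using G that unfolding pgraph_def by blast
    hence "a1 + a2 \<le> p (x1 + x2)" using G unfolding pgraph_def by blast
    also have "x1 + x2 = (x1 - y) + (x2 + y)" by simp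
    also have "p \<dots> \<le> p (x1 - y) + p (x2 + y)" by (rule sub)
    finally show ?thesis by simp
  qed
  have G0: "(0,0) \<in> G" using G unfolding pgraph_def by blast
  have Sne: "S \<noteq> {}" using G0 unfolding S_def by blast
  have Sbdd: "bdd_above S" unfolding S_def bdd_above_def using key[OF _ G0] by auto
  define c where "c = Sup S"
  have c1: "a - p (x - y) \<le> c" if "(x,a)\<in>G" for x a
    unfolding c_def using that Sbdd by (intro cSup_upper) (auto simp: S_def)
  have c2: "c \<le> p (x + y) - a" if "(x,a)\<in>G" for x a
    unfolding c_def using that Sne key by (intro cSup_least) (auto simp: S_def)
  have sc: "(r *\<^sub>R x, r*a) \<in> G" if "(x,a)\<in>G" for r x a using G that unfolding pgraph_def by blast
  have "a + t*c \<le> p (x + t *\<^sub>R y)" if xa: "(x,a)\<in>G" for x a t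
  proof (cases t "0::real" rule: linorder_cases)
    case less
    define s where "s = -t"
    have s: "s > 0" using less s_def by simp
    have "(1/s) * a - p ((1/s) *\<^sub>R x - y) \<le> c" using c1[OF sc[where r="1/s", OF xa]] .
    hence "s * ((1/s) * a - p ((1/s) *\<^sub>R x - y)) \<le> s * c" using s by (simp add: mult_left_mono)
    moreover have "s * p ((1/s) *\<^sub>R x - y) = p (s *\<^sub>R ((1/s) *\<^sub>R x - y))" using hom s by simp
    moreover have "s *\<^sub>R ((1/s) *\<^sub>R x - y) = x + t *\<^sub>R y" using s by (simp add: s_def algebra_simps)
    ultimately show ?thesis using s by (simp add: right_diff_distrib s_def)
  next
    case equal
    then show ?thesis using G xa unfolding pgraph_def by auto
  next
    case greater
    have "c \<le> p ((1/t) *\<^sub>R x + y) - (1/t) * a" using c2[OF sc[where r="1/t", OF xa]] .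
    hence "t * c \<le> t * (p ((1/t) *\<^sub>R x + y) - (1/t) * a)" using greater by (simp add: mult_left_mono)
    moreover have "t * p ((1/t) *\<^sub>R x + y) = p (t *\<^sub>R ((1/t) *\<^sub>R x + y))" using hom greater by simp
    moreover have "t *\<^sub>R ((1/t) *\<^sub>R x + y) = x + t *\<^sub>R y" using greater by (simp add: algebra_simps)
    ultimately show ?thesis using greater by (simp add: right_diff_distrib)
  qed
  thus ?thesis by blast
qed

theorem hahn_banach_sublinear:
  fixes p :: "'v::real_vector \<Rightarrow> real"
  assumes sub: "\<And>x y. p (x + y) \<le> p x + p y"
    and hom: "\<And>s x. 0 \<le> s \<Longrightarrow> p (s *\<^sub>R x) = s * p x"
  shows "\<exists>g. linear g \<and> (\<forall>x. g x \<le> p x) \<and> g z = p z"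
proof -
  have p0: "p 0 = 0" using hom[of 0 0] by simp
  have pneg: "- p x \<le> p (- x)" for x using sub[of x "-x"] p0 by simp
  define P where "P = {G. pgraph p G \<and> (z, p z) \<in> G}"
  define G0 where "G0 = {(t *\<^sub>R z, t * p z) | t. True}"
  have G0P: "G0 \<in> P"
  proof -
    have funG: "a = b" if hh: "(x,a)\<in>G0" "(x,b)\<in>G0" for x a b
    proof -
      obtain t s where ts: "x = t *\<^sub>R z" "a = t * p z" "x = s *\<^sub>R z" "b = s * p z"
        using hh unfolding G0_def by blast
      show ?thesis
      proof (cases "z = 0")
        case True thus ?thesis using ts p0 by simp
      next
        case False
        hence "t = s" using ts by (metis scaleR_cancel_right)
        thus ?thesis using ts by simp
      qed
    qed
    have dom: "a \<le> p x" if hh: "(x,a)\<in>G0" for x a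
    proof -
      obtain t where t: "x = t *\<^sub>R z" "a = t * p z" using hh unfolding G0_def by blast
      show ?thesis
      proof (cases "t \<ge> 0")
        case True thus ?thesis using t hom by simp
      next
        case False
        hence "p x = (-t) * p (-z)" using t hom[of "-t" "-z"] by simp
        moreover have "(-t) * (- p z) \<le> (-t) * p (-z)" using False pneg[of z] by (intro mult_left_mono) auto
        ultimately show ?thesis using t by simp
      qed
    qed
    have "(0,0) \<in> G0" unfolding G0_def by (auto intro!: exI[of _ 0])
    moreover have "(x+y,a+b)\<in>G0" if hh: "(x,a)\<in>G0" "(y,b)\<in>G0" for x a y b
    proof -
      obtain t s where "x = t *\<^sub>R z" "a = t * p z" "y = s *\<^sub>R z" "b = s * p z" using hh unfolding G0_def by blast
      thus ?thesis unfolding G0_def by (auto simp: scaleR_add_left distrib_right intro!: exI[of _ "t+s"])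
    qed
    moreover have "(c *\<^sub>R x, c*a)\<in>G0" if hh: "(x,a)\<in>G0" for x a c
    proof -
      obtain t where "x = t *\<^sub>R z" "a = t * p z" using hh unfolding G0_def by blast
      thus ?thesis unfolding G0_def by (auto intro!: exI[of _ "c * t"])
    qed
    moreover have "(z, p z) \<in> G0" unfolding G0_def by (auto intro!: exI[of _ 1])
    ultimately show ?thesis using funG dom unfolding P_def pgraph_def by blast
  qed
  have "\<exists>M\<in>P. \<forall>X\<in>P. M \<subseteq> X \<longrightarrow> X = M"
  proof (rule Zorn_Lemma2, intro ballI)
    fix Ch assume Ch: "Ch \<in> chains P"
    show "\<exists>U\<in>P. \<forall>X\<in>Ch. X \<subseteq> U"
    proof (cases "Ch = {}")
      case True thus ?thesis using G0P by blast
    next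
      case False
      have ChP: "Ch \<subseteq> P" and chain: "\<And>X Y. X \<in> Ch \<Longrightarrow> Y \<in> Ch \<Longrightarrow> X \<subseteq> Y \<or> Y \<subseteq> X"
        using Ch unfolding chains_def chain_subset_def by auto
      have two: "\<exists>X\<in>Ch. q1 \<in> X \<and> q2 \<in> X" if "q1 \<in> \<Union>Ch" "q2 \<in> \<Union>Ch" for q1 q2
        using that chain by blast
      have pg: "pgraph p X" if "X \<in> Ch" for X using that ChP unfolding P_def by blast
      have "pgraph p (\<Union>Ch)"
        unfolding pgraph_def
      proof (intro conjI allI impI)
        show "(0,0) \<in> \<Union>Ch" using False pg unfolding pgraph_def by blast
      next
        fix x a y b assume "(x,a) \<in> \<Union>Ch" "(y,b) \<in> \<Union>Ch"
        then obtain X where "X\<in>Ch" "(x,a)\<in>X" "(y,b)\<in>X" using two by blast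
        thus "(x+y,a+b) \<in> \<Union>Ch" using pg unfolding pgraph_def by blast
      next
        fix x a c assume "(x,a) \<in> \<Union>Ch"
        thus "(c *\<^sub>R x, c*a) \<in> \<Union>Ch" using pg unfolding pgraph_def by blast
      next
        fix x a b assume "(x,a) \<in> \<Union>Ch" "(x,b) \<in> \<Union>Ch"
        then obtain X where "X\<in>Ch" "(x,a)\<in>X" "(x,b)\<in>X" using two by blast
        thus "a = b" using pg unfolding pgraph_def by blast
      next
        fix x a assume "(x,a) \<in> \<Union>Ch"
        thus "a \<le> p x" using pg unfolding pgraph_def by blast
      qed
      moreover have "(z, p z) \<in> \<Union>Ch" using False ChP unfolding P_def by blast
      ultimately show ?thesis unfolding P_def by blast
    qed
  qed
  then obtain M where MP: "M \<in> P" and Mmax: "\<And>X. X \<in> P \<Longrightarrow> M \<subseteq> X \<Longrightarrow> X = M" by blast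
  have pM: "pgraph p M" and zM: "(z, p z) \<in> M" using MP unfolding P_def by auto
  have total: "\<exists>a. (y,a) \<in> M" for y
  proof (rule ccontr)
    assume ny: "\<not> (\<exists>a. (y,a) \<in> M)"
    obtain c where c: "\<And>x a t. (x,a)\<in>M \<Longrightarrow> a + t*c \<le> p (x + t *\<^sub>R y)"
      using hb_step[OF sub hom pM, of y] by blast
    define M' where "M' = {(x + t *\<^sub>R y, a + t*c) | x a t. (x,a)\<in>M}"
    have M0: "(0,0) \<in> M" using pM unfolding pgraph_def by blast
    have Madd: "\<And>x a y b. (x,a)\<in>M \<Longrightarrow> (y,b)\<in>M \<Longrightarrow> (x+y,a+b)\<in>M"
      and Msc: "\<And>x a r. (x,a)\<in>M \<Longrightarrow> (r *\<^sub>R x, r*a)\<in>M"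
      and Mfun: "\<And>x a b. (x,a)\<in>M \<Longrightarrow> (x,b)\<in>M \<Longrightarrow> a=b"
      using pM unfolding pgraph_def by blast+
    have "pgraph p M'"
      unfolding pgraph_def
    proof (intro conjI allI impI)
      have "(0 + 0 *\<^sub>R y, 0 + 0*c) \<in> M'" unfolding M'_def using M0 by blast
      thus "(0,0) \<in> M'" by simp
    next
      fix x a x' b assume "(x,a) \<in> M'" "(x',b) \<in> M'"
      then obtain x1 a1 t1 x2 a2 t2 where hh: "(x1,a1)\<in>M" "(x2,a2)\<in>M" "x = x1 + t1 *\<^sub>R y" "a = a1 + t1*c"
        "x' = x2 + t2 *\<^sub>R y" "b = a2 + t2*c" unfolding M'_def by blast
      have e: "x + x' = (x1+x2) + (t1+t2) *\<^sub>R y" "a + b = (a1+a2) + (t1+t2)*c"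
        using hh by (auto simp: algebra_simps)
      have "(x1+x2, a1+a2) \<in> M" using Madd hh(1,2) .
      hence "((x1+x2) + (t1+t2) *\<^sub>R y, (a1+a2) + (t1+t2)*c) \<in> M'" unfolding M'_def by blast
      thus "(x+x',a+b) \<in> M'" using e by simp
    next
      fix x a r assume "(x,a) \<in> M'"
      then obtain x1 a1 t1 where hh: "(x1,a1)\<in>M" "x = x1 + t1 *\<^sub>R y" "a = a1 + t1*c"
        unfolding M'_def by blast
      have e: "r *\<^sub>R x = r *\<^sub>R x1 + (r*t1) *\<^sub>R y" "r*a = r*a1 + (r*t1)*c"
        using hh by (auto simp: algebra_simps)
      have "(r *\<^sub>R x1, r*a1) \<in> M" using Msc hh(1) .
      hence "(r *\<^sub>R x1 + (r*t1) *\<^sub>R y, r*a1 + (r*t1)*c) \<in> M'" unfolding M'_def by blast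
      thus "(r *\<^sub>R x, r*a) \<in> M'" using e by simp
    next
      fix x a b assume "(x,a) \<in> M'" "(x,b) \<in> M'"
      then obtain x1 a1 t1 x2 a2 t2 where h: "(x1,a1)\<in>M" "(x2,a2)\<in>M" "x = x1 + t1 *\<^sub>R y" "a = a1 + t1*c"
        "x = x2 + t2 *\<^sub>R y" "b = a2 + t2*c" unfolding M'_def by blast
      have "t1 = t2"
      proof (rule ccontr)
        assume ne: "t1 \<noteq> t2"
        have "(x1 + (-1) *\<^sub>R x2, a1 + (-1)*a2) \<in> M" using Madd[OF h(1) Msc[OF h(2)]] .
        hence "((1/(t2-t1)) *\<^sub>R (x1 + (-1) *\<^sub>R x2), (1/(t2-t1)) * (a1 + (-1)*a2)) \<in> M" by (rule Msc)
        moreover have "(1/(t2-t1)) *\<^sub>R (x1 + (-1) *\<^sub>R x2) = y"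
        proof -
          have "x1 - x2 = (t2 - t1) *\<^sub>R y" using h(3,5) by (simp add: algebra_simps)
          thus ?thesis using ne by simp
        qed
        ultimately show False using ny by auto
      qed
      hence "x1 = x2" using h by simp
      hence "a1 = a2" using Mfun h by blast
      thus "a = b" using h \<open>t1 = t2\<close> by simp
    next
      fix x a assume "(x,a) \<in> M'"
      then obtain x1 a1 t1 where "(x1,a1)\<in>M" "x = x1 + t1 *\<^sub>R y" "a = a1 + t1*c"
        unfolding M'_def by blast
      thus "a \<le> p x" using c by blast
    qed
    moreover have "(z, p z) \<in> M'"
    proof -
      have "(z + 0 *\<^sub>R y, p z + 0*c) \<in> M'" unfolding M'_def using zM by blast
      thus ?thesis by simp
    qed
    ultimately have "M' \<in> P" unfolding P_def by blast
    moreover have "M \<subseteq> M'"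
    proof
      fix q assume "q \<in> M"
      then obtain x a where "q = (x,a)" "(x,a) \<in> M" by (cases q) auto
      moreover have "(x + 0 *\<^sub>R y, a + 0*c) \<in> M'" unfolding M'_def using calculation by blast
      ultimately show "q \<in> M'" by simp
    qed
    ultimately have "M' = M" using Mmax by blast
    moreover have "(y, c) \<in> M'"
    proof -
      have "(0 + 1 *\<^sub>R y, 0 + 1*c) \<in> M'" unfolding M'_def using M0 by blast
      thus ?thesis by simp
    qed
    ultimately show False using ny by blast
  qed
  define g where "g x = (THE a. (x,a) \<in> M)" for x
  have Mfun: "\<And>x a b. (x,a)\<in>M \<Longrightarrow> (x,b)\<in>M \<Longrightarrow> a=b" using pM unfolding pgraph_def by blast
  have gM: "(x, g x) \<in> M" for x
  proof -
    obtain a where "(x,a)\<in>M" using total by blast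
    thus ?thesis unfolding g_def using Mfun by (metis theI)
  qed
  have geq: "(x,a) \<in> M \<Longrightarrow> g x = a" for x a using gM Mfun by blast
  have MaddO: "\<And>x a y b. (x,a)\<in>M \<Longrightarrow> (y,b)\<in>M \<Longrightarrow> (x+y,a+b)\<in>M"
    and MscO: "\<And>x a r. (x,a)\<in>M \<Longrightarrow> (r *\<^sub>R x, r*a)\<in>M"
    and MdomO: "\<And>x a. (x,a)\<in>M \<Longrightarrow> a \<le> p x"
    using pM unfolding pgraph_def by blast+
  have "linear g"
  proof (rule linearI)
    fix x y show "g (x + y) = g x + g y" using geq[OF MaddO[OF gM[of x] gM[of y]]] .
  next
    fix r x show "g (r *\<^sub>R x) = r *\<^sub>R g x" using geq[OF MscO[OF gM[of x], of r]] by simp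
  qed
  moreover have "g x \<le> p x" for x using MdomO[OF gM[of x]] .
  moreover have "g z = p z" using geq zM by blast
  ultimately show ?thesis by blast
qed



lemma separation:
  fixes C :: "'v::real_normed_vector set"
  assumes clo: "closed C" and cvx: "convex C" and ne: "C \<noteq> {}" and x0: "x0 \<notin> C"
  shows "\<exists>g::'v \<Rightarrow>\<^sub>L real. \<exists>\<delta>>0. \<forall>c\<in>C. blinfun_apply g x0 + \<delta> \<le> blinfun_apply g c"
proof -
  obtain r0 where r0: "r0 > 0" "ball x0 r0 \<subseteq> - C"
    using clo x0 by (metis ComplI open_Compl open_contains_ball)
  define r where "r = r0 / 3"
  have r: "r > 0" using r0 r_def by simp
  have far: "3 * r \<le> norm (c - x0)" if "c \<in> C" for c
  proof (rule ccontr)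
    assume "\<not> ?thesis"
    hence "c \<in> ball x0 r0" using r_def by (simp add: dist_norm norm_minus_commute)
    thus False using r0 that by blast
  qed
  define Q where "Q = {l *\<^sub>R (c - x0 + e) | l c e. l \<ge> 0 \<and> c \<in> C \<and> norm e \<le> r}"
  obtain c0 where c0: "c0 \<in> C" using ne by blast
  have Q0: "0 \<in> Q"
  proof -
    have "(0::real) *\<^sub>R (c0 - x0 + 0) \<in> Q" unfolding Q_def using c0 r by (intro CollectI exI[of _ 0] exI[of _ c0] exI[of _ 0]) auto
    thus ?thesis by simp
  qed
  have Qsc: "s *\<^sub>R q \<in> Q" if hq: "q \<in> Q" "s \<ge> 0" for q s
  proof -
    obtain l c e where h: "q = l *\<^sub>R (c - x0 + e)" "l \<ge> 0" "c \<in> C" "norm e \<le> r" using hq unfolding Q_def by blast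
    have "(s*l) *\<^sub>R (c - x0 + e) \<in> Q" unfolding Q_def using h hq by (intro CollectI exI[of _ "s*l"] exI[of _ c] exI[of _ e]) auto
    thus ?thesis using h by simp
  qed
  have Qadd: "q1 + q2 \<in> Q" if hq: "q1 \<in> Q" "q2 \<in> Q" for q1 q2
  proof -
    obtain l1 c1 e1 where h1: "q1 = l1 *\<^sub>R (c1 - x0 + e1)" "l1 \<ge> 0" "c1 \<in> C" "norm e1 \<le> r" using hq unfolding Q_def by blast
    obtain l2 c2 e2 where h2: "q2 = l2 *\<^sub>R (c2 - x0 + e2)" "l2 \<ge> 0" "c2 \<in> C" "norm e2 \<le> r" using hq unfolding Q_def by blast
    show ?thesis
    proof (cases "l1 + l2 = 0")
      case True
      hence "l1 = 0" "l2 = 0" using h1 h2 by auto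
      thus ?thesis using h1 h2 Q0 by simp
    next
      case False
      define L where "L = l1 + l2"
      have L: "L > 0" using False h1 h2 L_def by simp
      define u where "u = l1 / L"
      have u: "0 \<le> u" "u \<le> 1" "1 - u = l2 / L" using L h1 h2 by (auto simp: u_def L_def field_simps)
      define c where "c = u *\<^sub>R c1 + (1 - u) *\<^sub>R c2"
      define e where "e = u *\<^sub>R e1 + (1 - u) *\<^sub>R e2"
      have cC: "c \<in> C" using cvx h1 h2 u unfolding c_def by (simp add: convex_def)
      have "norm e \<le> u * norm e1 + (1-u) * norm e2" unfolding e_def
        using u by (smt (verit) norm_scaleR norm_triangle_ineq)
      also have "\<dots> \<le> u * r + (1-u) * r" using u h1 h2 by (intro add_mono mult_left_mono) auto
      finally have eN: "norm e \<le> r" by (simp add: algebra_simps)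
      have "q1 + q2 = L *\<^sub>R (c - x0 + e)"
      proof -
        have "L *\<^sub>R (c - x0 + e) = (L*u) *\<^sub>R (c1 - x0 + e1) + (L*(1-u)) *\<^sub>R (c2 - x0 + e2)"
          unfolding c_def e_def by (simp add: algebra_simps)
        moreover have "L*u = l1" "L*(1-u) = l2" using L u by (auto simp: u_def)
        ultimately show ?thesis using h1 h2 by simp
      qed
      thus ?thesis unfolding Q_def using L cC eN by (intro CollectI exI[of _ L] exI[of _ c] exI[of _ e]) auto
    qed
  qed
  define p where "p x = Inf ((\<lambda>q. norm (x + q)) ` Q)" for x
  have bdd: "bdd_below ((\<lambda>q. norm (x + q)) ` Q)" for x by (rule bdd_belowI[of _ 0]) auto
  have plow: "p x \<le> norm (x + q)" if "q \<in> Q" for x q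
    unfolding p_def using that bdd by (intro cInf_lower) auto
  have pgr: "b \<le> p x" if "\<And>q. q \<in> Q \<Longrightarrow> b \<le> norm (x + q)" for b x
    unfolding p_def using that Q0 by (intro cInf_greatest) auto
  have pnn: "0 \<le> p x" for x by (rule pgr) auto
  have sub: "p (x + y) \<le> p x + p y" for x y
  proof -
    have "p (x + y) - p y \<le> norm (x + q1)" if q1: "q1 \<in> Q" for q1
    proof -
      have "p (x + y) - norm (x + q1) \<le> p y"
      proof (rule pgr)
        fix q2 assume q2: "q2 \<in> Q"
        have "p (x + y) \<le> norm ((x + y) + (q1 + q2))" using plow Qadd q1 q2 by blast
        also have "\<dots> \<le> norm (x + q1) + norm (y + q2)"
          by (metis (no_types, lifting) add.assoc add.left_commute norm_triangle_ineq)
        finally show "p (x + y) - norm (x + q1) \<le> norm (y + q2)" by simp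
      qed
      thus ?thesis by simp
    qed
    hence "p (x + y) - p y \<le> p x" by (intro pgr) auto
    thus ?thesis by simp
  qed
  have p0: "p 0 = 0" using plow[OF Q0, of 0] pnn[of 0] by simp
  have hom: "p (s *\<^sub>R x) = s * p x" if s: "0 \<le> s" for s x
  proof (cases "s = 0")
    case True thus ?thesis using p0 by simp
  next
    case False
    hence s: "s > 0" using s by simp
    have "p (s *\<^sub>R x) / s \<le> p x"
    proof -
      have "p (s *\<^sub>R x) / s \<le> norm (x + q)" if "q \<in> Q" for q
      proof -
        have "p (s *\<^sub>R x) \<le> norm (s *\<^sub>R x + s *\<^sub>R q)" using plow Qsc that s by simp
        also have "\<dots> = s * norm (x + q)" using s by (simp add: scaleR_add_right[symmetric])
        finally show ?thesis using s by (simp add: divide_le_eq mult.commute)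
      qed
      thus ?thesis by (intro pgr)
    qed
    moreover have "s * p x \<le> p (s *\<^sub>R x)"
    proof -
      have "s * p x \<le> norm (s *\<^sub>R x + q)" if "q \<in> Q" for q
      proof -
        have "p x \<le> norm (x + (1/s) *\<^sub>R q)" using plow Qsc that s by simp
        hence "s * p x \<le> s * norm (x + (1/s) *\<^sub>R q)" using s by (simp add: mult_left_mono)
        also have "s * norm (x + (1/s) *\<^sub>R q) = norm (s *\<^sub>R (x + (1/s) *\<^sub>R q))" using s by simp
        also have "s *\<^sub>R (x + (1/s) *\<^sub>R q) = s *\<^sub>R x + q" using s by (simp add: scaleR_add_right)
        finally show ?thesis .
      qed
      thus ?thesis by (intro pgr)
    qed
    ultimately show ?thesis using s by (simp add: divide_le_eq mult.commute)
  qed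
  define z where "z = c0 - x0"
  obtain g where g: "linear g" "\<And>x. g x \<le> p x" "g z = p z"
    using hahn_banach_sublinear[of p z] sub hom by blast
  have gb: "\<bar>g x\<bar> \<le> norm x" for x
  proof -
    have "g x \<le> norm x" using g(2)[of x] plow[OF Q0, of x] by simp
    moreover have "- g x \<le> norm x" using g(2)[of "-x"] plow[OF Q0, of "-x"] linear_neg[OF g(1)] by simp
    ultimately show ?thesis by simp
  qed
  have blg: "bounded_linear g"
  proof (rule bounded_linear_intro[where K=1])
    show "g (x + y) = g x + g y" for x y using linear_add[OF g(1)] .
    show "g (r *\<^sub>R x) = r *\<^sub>R g x" for r x using linear_scale[OF g(1)] .
    show "norm (g x) \<le> norm x * 1" for x using gb by simp
  qed
  have pz: "r \<le> p z"
  proof (rule pgr, rule ccontr)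
    fix q assume q: "q \<in> Q" and "\<not> r \<le> norm (z + q)"
    hence lt: "norm (z + q) < r" by simp
    obtain l c e where h: "q = l *\<^sub>R (c - x0 + e)" "l \<ge> 0" "c \<in> C" "norm e \<le> r" using q unfolding Q_def by blast
    define e' where "e' = - (z + q)"
    have e'n: "norm e' < r" using lt unfolding e'_def by (simp only: norm_minus_cancel)
    define u where "u = 1 / (1 + l)"
    have u: "0 < u" "u \<le> 1" using h by (auto simp: u_def)
    define c' where "c' = u *\<^sub>R c0 + (1 - u) *\<^sub>R c"
    define e'' where "e'' = u *\<^sub>R e' + (1 - u) *\<^sub>R e"
    have cC: "c' \<in> C" using cvx c0 h u unfolding c'_def by (simp add: convex_def)
    have "norm e'' \<le> u * norm e' + (1-u) * norm e" unfolding e''_def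
      using u by (smt (verit) norm_scaleR norm_triangle_ineq)
    also have "\<dots> \<le> u * r + (1-u) * r" using u h e'n by (intro add_mono mult_left_mono) auto
    finally have eN: "norm e'' \<le> r" by (simp add: algebra_simps)
    have "(1 + l) *\<^sub>R (c' - x0 + e'') = (c0 - x0 + e') + l *\<^sub>R (c - x0 + e)"
    proof -
      have "(1 + l) * u = 1" "(1 + l) * (1 - u) = l" using h by (auto simp: u_def field_simps)
      hence "(1 + l) *\<^sub>R (c' - x0 + e'') = ((1 + l) * u) *\<^sub>R (c0 - x0 + e') + ((1 + l) * (1 - u)) *\<^sub>R (c - x0 + e)"
        unfolding c'_def e''_def by (simp add: algebra_simps)
      thus ?thesis using \<open>(1 + l) * u = 1\<close> \<open>(1 + l) * (1 - u) = l\<close> by simp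
    qed
    also have "\<dots> = 0" using h by (simp add: e'_def z_def)
    finally have "c' - x0 + e'' = 0" using h by (smt (verit) scaleR_eq_0_iff)
    hence "norm (c' - x0) = norm e''" by (metis add_eq_0_iff norm_minus_cancel)
    thus False using far[OF cC] eN r by simp
  qed
  have zne: "z \<noteq> 0" using far[OF c0] r by (auto simp: z_def)
  define \<delta> where "\<delta> = r * r / norm z"
  have \<delta>: "\<delta> > 0" using r zne by (simp add: \<delta>_def)
  have gap: "g x0 + \<delta> \<le> g c" if c: "c \<in> C" for c
  proof -
    define e where "e = - (r / norm z) *\<^sub>R z"
    have eN: "norm e \<le> r" using r zne by (simp add: e_def)
    have "(1::real) *\<^sub>R (c - x0 + e) \<in> Q" unfolding Q_def using c eN
      by (intro CollectI exI[of _ 1] exI[of _ c] exI[of _ e]) auto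
    hence "g (- (c - x0 + e)) \<le> 0" using g(2)[of "- (c - x0 + e)"] plow[of _ "- (c - x0 + e)"] by force
    hence "0 \<le> g c - g x0 + g e" using linear_neg[OF g(1)] linear_add[OF g(1)] linear_diff[OF g(1)] by simp
    moreover have "g e = - (r / norm z) * g z" unfolding e_def using linear_scale[OF g(1)] linear_neg[OF g(1)] by simp
    moreover have "(r / norm z) * r \<le> (r / norm z) * g z" using pz g(3) r zne by (intro mult_left_mono) auto
    ultimately show ?thesis by (simp add: \<delta>_def)
  qed
  show ?thesis
    using gap \<delta> by (intro exI[of _ "Blinfun g"]) (auto simp: bounded_linear_Blinfun_apply[OF blg])
qed

lemma weak_closed_convex:
  fixes C :: "'v::real_normed_vector set"
  assumes clo: "closed C" and cvx: "convex C" and xs: "\<And>n. xs n \<in> C"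
    and wc: "\<And>f :: 'v \<Rightarrow>\<^sub>L real. (\<lambda>n. blinfun_apply f (xs n)) \<longlonglongrightarrow> blinfun_apply f x"
  shows "x \<in> C"
proof (rule ccontr)
  assume nx: "x \<notin> C"
  have ne: "C \<noteq> {}" using xs by blast
  obtain g :: "'v \<Rightarrow>\<^sub>L real" and \<delta> :: real where g: "\<delta> > 0" "\<forall>c\<in>C. blinfun_apply g x + \<delta> \<le> blinfun_apply g c"
    using separation[OF clo cvx ne nx] by auto
  have "blinfun_apply g x + \<delta> \<le> blinfun_apply g x"
    by (rule tendsto_lowerbound[OF wc[of g]]) (use g xs in auto)
  thus False using g by simp
qed



lemma cvx_le:
  fixes \<phi> :: "'v::real_vector \<Rightarrow> ereal"
  assumes "convex_efun \<phi>" "\<phi> x \<le> ereal a" "\<phi> y \<le> ereal b" "0 \<le> t" "t \<le> 1"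
  shows "\<phi> (t *\<^sub>R x + (1-t) *\<^sub>R y) \<le> ereal (t*a + (1-t)*b)"
proof -
  have "\<phi> (t *\<^sub>R x + (1-t) *\<^sub>R y) \<le> ereal t * \<phi> x + ereal (1-t) * \<phi> y"
    using assms(1,4,5) unfolding convex_efun_def by blast
  also have "\<dots> \<le> ereal t * ereal a + ereal (1-t) * ereal b"
    by (intro add_mono ereal_mult_left_mono) (use assms in auto)
  finally show ?thesis by simp
qed

lemma sublevel_convex:
  fixes \<phi> :: "'v::real_vector \<Rightarrow> ereal"
  assumes cv: "convex_efun \<phi>"
  shows "convex {z. \<phi> z \<le> ereal c}"
  unfolding convex_def
proof (intro ballI allI impI)
  fix x y and u v :: real assume hx: "x \<in> {z. \<phi> z \<le> ereal c}" and hy: "y \<in> {z. \<phi> z \<le> ereal c}"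
    and uv: "0 \<le> u" "0 \<le> v" "u + v = 1"
  have v: "v = 1 - u" using uv by simp
  have "\<phi> (u *\<^sub>R x + (1-u) *\<^sub>R y) \<le> ereal (u * c + (1-u) * c)"
    using cvx_le[OF cv, of x c y c u] hx hy uv by auto
  also have "u * c + (1-u) * c = c" by (simp add: algebra_simps)
  finally show "u *\<^sub>R x + v *\<^sub>R y \<in> {z. \<phi> z \<le> ereal c}" using v by simp
qed

lemma local_bound:
  fixes \<phi> :: "'v::banach \<Rightarrow> ereal"
  assumes lsc: "lsc_efun \<phi>" and R: "R > 0" and dom: "\<And>y. y \<in> cball x R \<Longrightarrow> \<phi> y < \<infinity>"
  shows "\<exists>x2 \<rho> M. \<rho> > 0 \<and> ball x2 \<rho> \<subseteq> cball x R \<and> (\<forall>y\<in>ball x2 \<rho>. \<phi> y \<le> ereal M)"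
proof -
  define X where "X = top_of_set (cball x R)"
  define F where "F k = cball x R \<inter> {y. \<phi> y \<le> ereal (real k)}" for k :: nat
  have cm: "completely_metrizable_space X"
  proof -
    have c: "closedin euclidean (cball x R)" using closed_closedin closed_cball by blast
    show ?thesis unfolding X_def by (rule completely_metrizable_space_closedin[OF completely_metrizable_space_euclidean c])
  qed
  have cl: "closedin X (F k)" for k
  proof -
    have "closed {y. \<phi> y \<le> ereal (real k)}" using lsc unfolding lsc_efun_def by blast
    thus ?thesis unfolding X_def F_def by (rule closedin_closed_Int)
  qed
  have un: "\<Union>(range F) = cball x R"
  proof
    show "\<Union>(range F) \<subseteq> cball x R" unfolding F_def by blast
  next
    show "cball x R \<subseteq> \<Union>(range F)"
    proof
      fix y assume y: "y \<in> cball x R"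
      have "\<phi> y \<le> ereal (real_of_ereal (\<phi> y))" using dom[OF y] by (cases "\<phi> y") auto
      then obtain r where r: "\<phi> y \<le> ereal r" by blast
      obtain k :: nat where "r \<le> real k" using real_arch_simple by blast
      hence "ereal r \<le> ereal (real k)" by simp
      with r have "\<phi> y \<le> ereal (real k)" by (rule order_trans)
      thus "y \<in> \<Union>(range F)" using y unfolding F_def by blast
    qed
  qed
  have "X interior_of \<Union>(range F) = cball x R"
    unfolding un X_def by (metis interior_of_topspace topspace_euclidean_subtopology)
  moreover have "x \<in> cball x R" using R by simp
  ultimately have ne: "X interior_of \<Union>(range F) \<noteq> {}" by blast
  have "\<exists>k. X interior_of F k \<noteq> {}"
  proof (rule ccontr)
    assume "\<not> ?thesis"
    hence "\<And>T. T \<in> range F \<Longrightarrow> closedin X T \<and> X interior_of T = {}" using cl by auto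
    hence "X interior_of \<Union>(range F) = {}" by (intro Baire_category_alt) (use cm in auto)
    thus False using ne by blast
  qed
  then obtain k where "X interior_of F k \<noteq> {}" by blast
  then obtain y0 U where U: "openin X U" "y0 \<in> U" "U \<subseteq> F k" unfolding interior_of_def by blast
  obtain T where T: "open T" "U = cball x R \<inter> T" using U(1) unfolding X_def openin_open by blast
  have y0: "y0 \<in> cball x R" "y0 \<in> T" using U T by auto
  obtain e where e: "e > 0" "ball y0 e \<subseteq> T" using T(1) y0(2) open_contains_ball by blast
  define t where "t = min (1/2) (e / (2*R))"
  have t: "0 < t" "t \<le> 1/2" "t * R \<le> e/2" using e R by (auto simp: t_def min_def field_simps)
  define x2 where "x2 = y0 + t *\<^sub>R (x - y0)"
  define \<rho> where "\<rho> = t * R"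
  have d0: "dist x y0 \<le> R" using y0 by simp
  have sub1: "ball x2 \<rho> \<subseteq> cball x R"
  proof
    fix y assume "y \<in> ball x2 \<rho>"
    hence "dist y x2 < \<rho>" by (simp add: dist_commute)
    moreover have "dist x2 x = (1 - t) * dist x y0"
    proof -
      have "x2 - x = (1 - t) *\<^sub>R (y0 - x)" unfolding x2_def by (simp add: algebra_simps)
      thus ?thesis using t by (simp add: dist_norm norm_minus_commute)
    qed
    moreover have "(1 - t) * dist x y0 \<le> (1 - t) * R" using d0 t by (intro mult_left_mono) auto
    ultimately have "dist y x < R" using dist_triangle[of y x x2] unfolding \<rho>_def by (simp add: algebra_simps dist_commute)
    thus "y \<in> cball x R" by (simp add: dist_commute)
  qed
  have sub2: "ball x2 \<rho> \<subseteq> ball y0 e"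
  proof
    fix y assume "y \<in> ball x2 \<rho>"
    hence "dist y x2 < \<rho>" by (simp add: dist_commute)
    moreover have "dist x2 y0 = t * dist x y0"
    proof -
      have "x2 - y0 = t *\<^sub>R (x - y0)" unfolding x2_def by simp
      thus ?thesis using t by (simp add: dist_norm)
    qed
    moreover have "t * dist x y0 \<le> t * R" using d0 t by (intro mult_left_mono) auto
    ultimately have "dist y y0 < e" using dist_triangle[of y y0 x2] t(3) unfolding \<rho>_def by (simp add: dist_commute)
    thus "y \<in> ball y0 e" by (simp add: dist_commute)
  qed
  have "\<forall>y\<in>ball x2 \<rho>. \<phi> y \<le> ereal (real k)"
  proof
    fix y assume y: "y \<in> ball x2 \<rho>"
    hence "y \<in> U" using sub1 sub2 e(2) T(2) by blast
    hence "y \<in> F k" using U(3) by blast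
    thus "\<phi> y \<le> ereal (real k)" unfolding F_def by blast
  qed
  moreover have "\<rho> > 0" using t R unfolding \<rho>_def by simp
  ultimately show ?thesis using sub1 by blast
qed

lemma usc_at:
  fixes \<phi> :: "'v::banach \<Rightarrow> ereal"
  assumes pr: "proper_fun \<phi>" and cv: "convex_efun \<phi>" and lsc: "lsc_efun \<phi>"
    and xi: "x \<in> interior (edom \<phi>)" and eps: "\<epsilon> > 0"
  shows "\<exists>\<rho>>0. \<forall>z. norm (z - x) < \<rho> \<longrightarrow> \<phi> z \<le> ereal (real_of_ereal (\<phi> x) + \<epsilon>)"
proof -
  obtain R0 where R0: "R0 > 0" "ball x R0 \<subseteq> edom \<phi>" using xi by (meson mem_interior)
  define R where "R = R0 / 2"
  have R: "R > 0" using R0 by (simp add: R_def)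
  have "cball x R \<subseteq> ball x R0" using R0(1) by (auto simp: R_def)
  hence cb: "cball x R \<subseteq> edom \<phi>" using R0(2) by (rule subset_trans)
  have dom: "\<phi> y < \<infinity>" if "y \<in> cball x R" for y using cb that unfolding edom_def by blast
  have nm: "\<phi> y \<noteq> -\<infinity>" for y using pr unfolding proper_fun_def by blast
  have fin: "\<phi> y = ereal (real_of_ereal (\<phi> y))" if "y \<in> cball x R" for y
    using dom[OF that] nm[of y] by (cases "\<phi> y") auto
  obtain x2 \<rho>2 M where lb: "\<rho>2 > 0" "ball x2 \<rho>2 \<subseteq> cball x R" "\<forall>y\<in>ball x2 \<rho>2. \<phi> y \<le> ereal M"
    using local_bound[OF lsc R dom] by blast
  have x2c: "x2 \<in> cball x R" using lb(1,2) centre_in_ball by blast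
  define y where "y = x + (x - x2)"
  have yc: "y \<in> cball x R" using x2c by (simp add: y_def dist_norm norm_minus_commute)
  define fy where "fy = real_of_ereal (\<phi> y)"
  define a where "a = real_of_ereal (\<phi> x)"
  have xa: "\<phi> x = ereal a" using fin[of x] R by (simp add: a_def)
  define B where "B = (1/2) * fy + (1 - 1/2) * M"
  have bnd: "\<phi> z \<le> ereal B" if z: "norm (z - x) < \<rho>2 / 2" for z
  proof -
    define w where "w = x2 + 2 *\<^sub>R (z - x)"
    have "dist x2 w < \<rho>2" using z by (simp add: w_def dist_norm)
    hence w: "\<phi> w \<le> ereal M" using lb(3) by auto
    have yw: "y + w = 2 *\<^sub>R z" unfolding y_def w_def by (simp add: algebra_simps scaleR_2)
    have "(1/2) *\<^sub>R y + (1 - 1/2) *\<^sub>R w = (1/2) *\<^sub>R (y + w)" by (simp add: scaleR_add_right)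
    hence "z = (1/2) *\<^sub>R y + (1 - 1/2) *\<^sub>R w" using yw by simp
    moreover have "\<phi> y \<le> ereal fy" using fin[OF yc] by (simp add: fy_def)
    ultimately show ?thesis using cvx_le[OF cv \<open>\<phi> y \<le> ereal fy\<close> w, of "1/2"] unfolding B_def by simp
  qed
  define r where "r = \<rho>2 / 4"
  have r: "r > 0" using lb by (simp add: r_def)
  define D where "D = \<bar>B - a\<bar> + 1"
  have D: "D > 0" by (simp add: D_def)
  define \<rho> where "\<rho> = min r (\<epsilon> * r / D)"
  have \<rho>: "\<rho> > 0" using r D eps by (simp add: \<rho>_def)
  have "\<phi> z \<le> ereal (a + \<epsilon>)" if z: "norm (z - x) < \<rho>" for z
  proof (cases "z = x")
    case True thus ?thesis using xa eps by simp
  next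
    case False
    define l where "l = norm (z - x) / r"
    have l: "0 < l" "l < 1" using False z r unfolding l_def \<rho>_def by auto
    define w where "w = x + (1/l) *\<^sub>R (z - x)"
    have "norm (w - x) = r" using l r False unfolding w_def l_def by simp
    hence "norm (w - x) < \<rho>2 / 2" using r unfolding r_def by simp
    hence wb: "\<phi> w \<le> ereal B" by (rule bnd)
    have "z = l *\<^sub>R w + (1 - l) *\<^sub>R x" using l unfolding w_def by (simp add: algebra_simps)
    hence c1: "\<phi> z \<le> ereal (l * B + (1 - l) * a)" using cvx_le[OF cv wb, of x a l] xa l by simp
    have e1: "l * B + (1 - l) * a = a + l * (B - a)" by (simp add: algebra_simps)
    have e2: "l * (B - a) \<le> l * D" using l by (intro mult_left_mono) (auto simp: D_def)
    have e3: "l * D < \<epsilon>"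
    proof -
      have "norm (z - x) < \<epsilon> * r / D" using z unfolding \<rho>_def by simp
      hence "norm (z - x) * D < \<epsilon> * r" using D by (simp add: pos_less_divide_eq)
      thus ?thesis using r D unfolding l_def by (simp add: field_simps)
    qed
    have "l * B + (1 - l) * a \<le> a + \<epsilon>" using e1 e2 e3 by linarith
    hence "ereal (l * B + (1 - l) * a) \<le> ereal (a + \<epsilon>)" by simp
    thus ?thesis using c1 by (rule order_trans[rotated])
  qed
  thus ?thesis using \<rho> unfolding a_def by blast
qed

lemma weak_lsc:
  fixes \<phi> :: "'v::real_normed_vector \<Rightarrow> ereal"
  assumes cv: "convex_efun \<phi>" and lsc: "lsc_efun \<phi>" and wc: "weak_conv us u"
    and ua: "\<phi> u = ereal a" and eps: "\<epsilon> > 0"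
  shows "eventually (\<lambda>n. ereal (a - \<epsilon>) < \<phi> (us n)) sequentially"
proof (rule ccontr)
  assume "\<not> ?thesis"
  hence "\<forall>N. \<exists>n\<ge>N. \<phi> (us n) \<le> ereal (a - \<epsilon>)" unfolding eventually_sequentially by (auto simp: not_less)
  hence "infinite {n. \<phi> (us n) \<le> ereal (a - \<epsilon>)}" unfolding infinite_nat_iff_unbounded_le by blast
  then obtain r :: "nat \<Rightarrow> nat" where r: "strict_mono r" "\<forall>n. r n \<in> {n. \<phi> (us n) \<le> ereal (a - \<epsilon>)}"
    using infinite_enumerate by blast
  have "u \<in> {z. \<phi> z \<le> ereal (a - \<epsilon>)}"
  proof (rule weak_closed_convex[where xs = "us \<circ> r"])
    show "closed {z. \<phi> z \<le> ereal (a - \<epsilon>)}" using lsc unfolding lsc_efun_def by blast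
    show "convex {z. \<phi> z \<le> ereal (a - \<epsilon>)}" by (rule sublevel_convex[OF cv])
    show "(us \<circ> r) n \<in> {z. \<phi> z \<le> ereal (a - \<epsilon>)}" for n using r by simp
    show "(\<lambda>n. blinfun_apply f ((us \<circ> r) n)) \<longlonglongrightarrow> blinfun_apply f u" for f :: "'v \<Rightarrow>\<^sub>L real"
      using LIMSEQ_subseq_LIMSEQ[OF wc[unfolded weak_conv_def, rule_format, of f] r(1)] by (simp add: o_def)
  qed
  thus False using ua eps by simp
qed


theorem mainTheorem3:
  fixes C :: "'v::banach set"
    and A :: "'b::banach set"
    and T :: "'b \<Rightarrow> 'v \<Rightarrow> ('v \<Rightarrow>\<^sub>L real)"
    and \<phi> :: "'v \<Rightarrow> ereal"
    and K :: "'v \<Rightarrow> 'v set"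
    and m :: "'v \<Rightarrow>\<^sub>L real"
    and C0 :: "'v set"
    and h :: "real \<Rightarrow> real"
    and a :: 'b
  assumes refl: "reflexive_space TYPE('v)"
    and C_ne: "C \<noteq> {}" and C_closed: "closed C" and C_convex: "convex C"
    and A_ne: "A \<noteq> {}"
    (* (H_T) *)
    and T_bdd: "bounded_operator T"
    and T_lin: "\<And>u. linear (\<lambda>b. T b u)"
    and T_mono: "\<And>b. b \<in> A \<Longrightarrow> monotone_op (T b)"
    and T_cont: "\<And>b. b \<in> A \<Longrightarrow> continuous_on UNIV (T b)"
    (* (H_phi) *)
    and phi_proper: "proper_fun \<phi>" and phi_convex: "convex_efun \<phi>"
    and phi_lsc: "lsc_efun \<phi>" and C_dom: "C \<subseteq> interior (edom \<phi>)"
    (* (H_K) *)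
    and K_sub: "\<And>u. u \<in> C \<Longrightarrow> K u \<subseteq> C"
    and K_ne: "\<And>u. u \<in> C \<Longrightarrow> K u \<noteq> {}"
    and K_closed: "\<And>u. u \<in> C \<Longrightarrow> closed (K u)"
    and K_convex: "\<And>u. u \<in> C \<Longrightarrow> convex (K u)"
    and K_i: "\<And>xs x y. (\<forall>n. xs n \<in> C) \<Longrightarrow> weak_conv xs x \<Longrightarrow> y \<in> K x \<Longrightarrow>
               \<exists>ys. (\<forall>n. ys n \<in> C \<and> ys n \<in> K (xs n)) \<and> ys \<longlonglongrightarrow> y"
    and K_ii: "\<And>xs ys x y. (\<forall>n. xs n \<in> C) \<Longrightarrow> (\<forall>n. ys n \<in> C) \<Longrightarrow> (\<forall>n. ys n \<in> K (xs n)) \<Longrightarrow>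
               weak_conv xs x \<Longrightarrow> weak_conv ys y \<Longrightarrow> y \<in> K x"
    (* (H_0) *)
    and C0_bdd: "bounded C0"
    and C0_meets: "\<And>u. u \<in> C \<Longrightarrow> K u \<inter> C0 \<noteq> {}"
    and h_lim: "filterlim h at_top at_top"
    and coercive: "\<And>v0 b w. v0 \<in> C0 \<Longrightarrow> b \<in> A \<Longrightarrow> w \<in> C \<Longrightarrow>
        ereal (blinfun_apply (T b w) (w - v0)) + \<phi> w - \<phi> v0 \<ge> ereal (h (norm w) * norm w)"
    and a_in: "a \<in> A"
  shows "(\<forall>ws us w u. (\<forall>n. ws n \<in> C) \<longrightarrow> (\<forall>n. us n \<in> C) \<longrightarrow>
            (\<forall>n. us n \<in> var_sel T \<phi> K m a (ws n)) \<longrightarrow>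
            weak_conv ws w \<longrightarrow> weak_conv us u \<longrightarrow> u \<in> var_sel T \<phi> K m a w)
         \<and> bounded (\<Union>w\<in>C. var_sel T \<phi> K m a w)"
proof -
  have nm: "\<phi> y \<noteq> -\<infinity>" for y using phi_proper unfolding proper_fun_def by blast
  define f where "f x = real_of_ereal (\<phi> x)" for x
  have finC: "\<phi> x = ereal (f x)" if "x \<in> C" for x
  proof -
    have "x \<in> edom \<phi>" using C_dom that interior_subset by blast
    hence "\<phi> x < \<infinity>" unfolding edom_def by blast
    thus ?thesis using nm[of x] unfolding f_def by (cases "\<phi> x") auto
  qed
  have selK: "u \<in> K w" if "u \<in> var_sel T \<phi> K m a w" for u w using that unfolding var_sel_def by blast
  have selR: "blinfun_apply m (v - u) \<le> blinfun_apply (T a u) (v - u) + f v - f u"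
    if w: "w \<in> C" and u: "u \<in> var_sel T \<phi> K m a w" and v: "v \<in> K w" for w u v
  proof -
    have uC: "u \<in> C" using K_sub[OF w] selK[OF u] by blast
    have vC: "v \<in> C" using K_sub[OF w] v by blast
    have "ereal (blinfun_apply (T a u) (v - u)) + \<phi> v - \<phi> u \<ge> ereal (blinfun_apply m (v - u))"
      using u v unfolding var_sel_def by blast
    thus ?thesis using finC[OF uC] finC[OF vC] by simp
  qed
  obtain B0 where B0: "\<And>v. v \<in> C0 \<Longrightarrow> norm v \<le> B0" using C0_bdd unfolding bounded_iff by blast
  define L where "L = norm m + norm m * \<bar>B0\<bar> + 1"
  obtain N where N: "\<And>t. t \<ge> N \<Longrightarrow> L \<le> h t"
    using h_lim unfolding filterlim_at_top eventually_at_top_linorder by blast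
  have bdd_sel: "norm u \<le> max N 1" if w: "w \<in> C" and u: "u \<in> var_sel T \<phi> K m a w" for w u
  proof (rule ccontr)
    assume "\<not> ?thesis"
    hence big: "norm u > N" "norm u > 1" by auto
    obtain v0 where v0: "v0 \<in> K w" "v0 \<in> C0" using C0_meets[OF w] by blast
    have uC: "u \<in> C" using K_sub[OF w] selK[OF u] by blast
    have v0C: "v0 \<in> C" using K_sub[OF w] v0 by blast
    have i1: "blinfun_apply m (v0 - u) \<le> blinfun_apply (T a u) (v0 - u) + f v0 - f u"
      using selR[OF w u v0(1)] .
    have "ereal (blinfun_apply (T a u) (u - v0)) + \<phi> u - \<phi> v0 \<ge> ereal (h (norm u) * norm u)"
      using coercive[OF v0(2) a_in uC] .
    hence i2: "h (norm u) * norm u \<le> blinfun_apply (T a u) (u - v0) + f u - f v0"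
      using finC[OF uC] finC[OF v0C] by simp
    have neg: "blinfun_apply (T a u) (v0 - u) = - blinfun_apply (T a u) (u - v0)"
      by (metis blinfun.minus_right minus_diff_eq)
    have negm: "blinfun_apply m (v0 - u) = - blinfun_apply m (u - v0)"
      by (metis blinfun.minus_right minus_diff_eq)
    have "h (norm u) * norm u \<le> blinfun_apply m (u - v0)" using i1 i2 neg negm by linarith
    also have "\<dots> \<le> norm m * norm (u - v0)" using norm_blinfun[of m "u - v0"] by simp
    also have "\<dots> \<le> norm m * (norm u + \<bar>B0\<bar>)"
      using norm_triangle_ineq4[of u v0] B0[OF v0(2)] by (intro mult_left_mono) auto
    finally have A: "h (norm u) * norm u \<le> norm m * norm u + norm m * \<bar>B0\<bar>" by (simp add: algebra_simps)
    have "L * norm u \<le> h (norm u) * norm u" using N[of "norm u"] big by (intro mult_right_mono) auto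
    moreover have "norm m * \<bar>B0\<bar> * 1 \<le> norm m * \<bar>B0\<bar> * norm u"
      using big by (intro mult_left_mono) auto
    moreover have "L * norm u = norm m * norm u + norm m * \<bar>B0\<bar> * norm u + norm u"
      unfolding L_def by (simp add: algebra_simps)
    ultimately show False using A big by linarith
  qed
  have part2: "bounded (\<Union>w\<in>C. var_sel T \<phi> K m a w)"
    unfolding bounded_iff using bdd_sel by blast
  have part1: "u \<in> var_sel T \<phi> K m a w"
    if ws: "\<forall>n. ws n \<in> C" and us: "\<forall>n. us n \<in> C" and sel: "\<forall>n. us n \<in> var_sel T \<phi> K m a (ws n)"
      and wcw: "weak_conv ws w" and wcu: "weak_conv us u" for ws us w u
  proof -
    have usK: "\<forall>n. us n \<in> K (ws n)" using sel selK by blast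
    have uK: "u \<in> K w" using K_ii[OF ws us usK wcw wcu] .
    have KwC: "y \<in> C" if y: "y \<in> K w" for y
    proof -
      obtain ys where "\<forall>n. ys n \<in> C \<and> ys n \<in> K (ws n)" "ys \<longlonglongrightarrow> y" using K_i[OF ws wcw y] by blast
      thus ?thesis using closed_sequentially[OF C_closed] by blast
    qed
    have uC: "u \<in> C" using KwC uK .
    define Bu where "Bu = max N 1"
    have usB: "norm (us n) \<le> Bu" for n unfolding Bu_def using bdd_sel ws sel by blast
    have "bounded ({a} \<times> range us)"
      using usB by (intro bounded_Times) (auto simp: bounded_iff)
    hence "bounded ((\<lambda>(b, x). T b x) ` ({a} \<times> range us))" using T_bdd unfolding bounded_operator_def by blast
    then obtain BT where BT0: "\<And>y. y \<in> (\<lambda>(b, x). T b x) ` ({a} \<times> range us) \<Longrightarrow> norm y \<le> BT"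
      unfolding bounded_iff by blast
    have BT: "norm (T a (us n)) \<le> BT" for n using BT0[of "T a (us n)"] by force
    have Tn_le: "blinfun_apply (T a (us n)) x \<le> BT * norm x" for n x
    proof -
      have "blinfun_apply (T a (us n)) x \<le> norm (T a (us n)) * norm x"
        using norm_blinfun[of "T a (us n)" x] by simp
      also have "\<dots> \<le> BT * norm x" using BT[of n] by (intro mult_right_mono) auto
      finally show ?thesis .
    qed
    have m_ge: "- (norm m * norm x) \<le> blinfun_apply m x" for x
      using norm_blinfun[of m x] by simp
    have wlim: "(\<lambda>n. blinfun_apply g (us n)) \<longlonglongrightarrow> blinfun_apply g u" for g :: "'v \<Rightarrow>\<^sub>L real"
      using wcu unfolding weak_conv_def by blast
    have ineq: "blinfun_apply m (v - u) \<le> blinfun_apply (T a u) (v - u) + f v - f u" if v: "v \<in> K w" for v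
    proof -
      have vC: "v \<in> C" using KwC v .
      obtain vs where vs: "\<forall>n. vs n \<in> C \<and> vs n \<in> K (ws n)" "vs \<longlonglongrightarrow> v" using K_i[OF ws wcw v] by blast
      obtain us' where us': "\<forall>n. us' n \<in> C \<and> us' n \<in> K (ws n)" "us' \<longlonglongrightarrow> u" using K_i[OF ws wcw uK] by blast
      have key: "blinfun_apply m (v - u) \<le> blinfun_apply (T a (u + t *\<^sub>R (v - u))) (v - u) + f v - f u"
        if t: "0 < t" "t \<le> 1" for t
      proof -
        define z where "z = u + t *\<^sub>R (v - u)"
        define yn where "yn n = (1 - t) *\<^sub>R us' n + t *\<^sub>R vs n" for n
        have P: "blinfun_apply m (z - us n) - norm m * norm (yn n - z)
          \<le> blinfun_apply (T a z) (z - us n) + BT * norm (yn n - z) + (1 - t) * f (us' n) + t * f (vs n) - f (us n)" for n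
        proof -
          let ?Tn = "T a (us n)"
          have I: "blinfun_apply m (vs n - us n) \<le> blinfun_apply ?Tn (vs n - us n) + f (vs n) - f (us n)"
            using selR[of "ws n" "us n" "vs n"] ws sel vs(1) by blast
          have J: "blinfun_apply m (us' n - us n) \<le> blinfun_apply ?Tn (us' n - us n) + f (us' n) - f (us n)"
            using selR[of "ws n" "us n" "us' n"] ws sel us'(1) by blast
          have dec: "yn n - us n = (1 - t) *\<^sub>R (us' n - us n) + t *\<^sub>R (vs n - us n)"
            unfolding yn_def by (simp add: algebra_simps)
          have lin: "blinfun_apply g (yn n - us n) = (1 - t) * blinfun_apply g (us' n - us n) + t * blinfun_apply g (vs n - us n)"
            for g :: "'v \<Rightarrow>\<^sub>L real" unfolding dec by (simp add: blinfun.add_right blinfun.scaleR_right)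
          have comb: "blinfun_apply m (yn n - us n) \<le> blinfun_apply ?Tn (yn n - us n) + (1 - t) * f (us' n) + t * f (vs n) - f (us n)"
          proof -
            have "(1 - t) * blinfun_apply m (us' n - us n) \<le> (1 - t) * (blinfun_apply ?Tn (us' n - us n) + f (us' n) - f (us n))"
              using J t by (intro mult_left_mono) auto
            moreover have "t * blinfun_apply m (vs n - us n) \<le> t * (blinfun_apply ?Tn (vs n - us n) + f (vs n) - f (us n))"
              using I t by (intro mult_left_mono) auto
            ultimately show ?thesis unfolding lin by (simp add: algebra_simps)
          qed
          have mono: "0 \<le> blinfun_apply (T a z - ?Tn) (z - us n)"
            using T_mono[OF a_in] unfolding monotone_op_def by blast
          hence mono': "blinfun_apply ?Tn (z - us n) \<le> blinfun_apply (T a z) (z - us n)"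
            by (simp add: blinfun.diff_left)
          have s1: "yn n - us n = (z - us n) + (yn n - z)" by simp
          have e1: "blinfun_apply ?Tn (yn n - us n) = blinfun_apply ?Tn (z - us n) + blinfun_apply ?Tn (yn n - z)"
            by (subst s1, rule blinfun.add_right)
          have e2: "blinfun_apply m (yn n - us n) = blinfun_apply m (z - us n) + blinfun_apply m (yn n - z)"
            by (subst s1, rule blinfun.add_right)
          show ?thesis using comb e1 e2 mono' Tn_le[of n "yn n - z"] m_ge[of "yn n - z"] by linarith
        qed
        have fu: "\<phi> u = ereal (f u)" using finC[OF uC] .
        have lim0: "(\<lambda>n. norm (yn n - z)) \<longlonglongrightarrow> 0"
        proof -
          have "yn \<longlonglongrightarrow> (1 - t) *\<^sub>R u + t *\<^sub>R v" unfolding yn_def by (intro tendsto_intros us'(2) vs(2))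
          moreover have "(1 - t) *\<^sub>R u + t *\<^sub>R v = z" unfolding z_def by (simp add: algebra_simps)
          ultimately have "(\<lambda>n. yn n - z) \<longlonglongrightarrow> 0" by (simp add: LIM_zero)
          thus ?thesis using tendsto_norm_zero by blast
        qed
        have eps: "0 \<le> t * (blinfun_apply (T a z) (v - u) - blinfun_apply m (v - u) + f v - f u) + 2 * e"
          if e: "e > 0" for e
        proof -
          obtain \<rho>1 where \<rho>1: "\<rho>1 > 0" "\<And>y. norm (y - u) < \<rho>1 \<Longrightarrow> \<phi> y \<le> ereal (f u + e)"
            using usc_at[OF phi_proper phi_convex phi_lsc _ e, of u] C_dom uC unfolding f_def by blast
          obtain \<rho>2 where \<rho>2: "\<rho>2 > 0" "\<And>y. norm (y - v) < \<rho>2 \<Longrightarrow> \<phi> y \<le> ereal (f v + e)"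
            using usc_at[OF phi_proper phi_convex phi_lsc _ e, of v] C_dom vC unfolding f_def by blast
          have ev1: "eventually (\<lambda>n. f (us' n) \<le> f u + e) sequentially"
          proof -
            have "eventually (\<lambda>n. dist (us' n) u < \<rho>1) sequentially" using us'(2) \<rho>1(1) tendsto_iff by blast
            thus ?thesis
            proof (rule eventually_mono)
              fix n assume "dist (us' n) u < \<rho>1"
              hence "\<phi> (us' n) \<le> ereal (f u + e)" using \<rho>1(2) by (simp add: dist_norm)
              thus "f (us' n) \<le> f u + e" using finC us'(1) by (metis ereal_less_eq(3))
            qed
          qed
          have ev2: "eventually (\<lambda>n. f (vs n) \<le> f v + e) sequentially"
          proof -
            have "eventually (\<lambda>n. dist (vs n) v < \<rho>2) sequentially" using vs(2) \<rho>2(1) tendsto_iff by blast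
            thus ?thesis
            proof (rule eventually_mono)
              fix n assume "dist (vs n) v < \<rho>2"
              hence "\<phi> (vs n) \<le> ereal (f v + e)" using \<rho>2(2) by (simp add: dist_norm)
              thus "f (vs n) \<le> f v + e" using finC vs(1) by (metis ereal_less_eq(3))
            qed
          qed
          have ev3: "eventually (\<lambda>n. f u - e < f (us n)) sequentially"
            using weak_lsc[OF phi_convex phi_lsc wcu fu e]
          proof (rule eventually_mono)
            fix n assume "ereal (f u - e) < \<phi> (us n)"
            thus "f u - e < f (us n)" using finC us by (metis less_ereal.simps(1))
          qed
          define G where "G n = (blinfun_apply (T a z) z - blinfun_apply (T a z) (us n)) - (blinfun_apply m z - blinfun_apply m (us n))
             + (BT + norm m) * norm (yn n - z) + ((1 - t) * (f u + e) + t * (f v + e) - (f u - e))" for n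
          have Glim: "G \<longlonglongrightarrow> (blinfun_apply (T a z) z - blinfun_apply (T a z) u) - (blinfun_apply m z - blinfun_apply m u)
             + (BT + norm m) * 0 + ((1 - t) * (f u + e) + t * (f v + e) - (f u - e))"
            unfolding G_def by (intro tendsto_intros wlim lim0)
          have evG: "eventually (\<lambda>n. 0 \<le> G n) sequentially"
            using ev1 ev2 ev3
          proof eventually_elim
            case (elim n)
            have "(1 - t) * f (us' n) \<le> (1 - t) * (f u + e)" using elim t by (intro mult_left_mono) auto
            moreover have "t * f (vs n) \<le> t * (f v + e)" using elim t by (intro mult_left_mono) auto
            moreover have "blinfun_apply (T a z) (z - us n) = blinfun_apply (T a z) z - blinfun_apply (T a z) (us n)"
              by (rule blinfun.diff_right)
            moreover have "blinfun_apply m (z - us n) = blinfun_apply m z - blinfun_apply m (us n)"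
              by (rule blinfun.diff_right)
            ultimately show ?case using P[of n] elim unfolding G_def by (simp add: algebra_simps)
          qed
          have "0 \<le> (blinfun_apply (T a z) z - blinfun_apply (T a z) u) - (blinfun_apply m z - blinfun_apply m u)
             + (BT + norm m) * 0 + ((1 - t) * (f u + e) + t * (f v + e) - (f u - e))"
            by (rule tendsto_lowerbound[OF Glim evG]) simp
          moreover have "blinfun_apply (T a z) z - blinfun_apply (T a z) u = t * blinfun_apply (T a z) (v - u)"
            unfolding z_def by (simp add: blinfun.add_right blinfun.scaleR_right)
          moreover have "blinfun_apply m z - blinfun_apply m u = t * blinfun_apply m (v - u)"
            unfolding z_def by (simp add: blinfun.add_right blinfun.scaleR_right)
          ultimately show ?thesis by (simp add: algebra_simps)
        qed
        have "0 \<le> t * (blinfun_apply (T a z) (v - u) - blinfun_apply m (v - u) + f v - f u)"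
        proof (rule field_le_epsilon)
          fix e :: real assume "0 < e"
          thus "0 \<le> t * (blinfun_apply (T a z) (v - u) - blinfun_apply m (v - u) + f v - f u) + e"
            using eps[of "e / 2"] by simp
        qed
        hence "0 \<le> blinfun_apply (T a z) (v - u) - blinfun_apply m (v - u) + f v - f u"
          using t by (simp add: zero_le_mult_iff)
        thus ?thesis unfolding z_def by simp
      qed
      define tk where "tk k = 1 / real (Suc k)" for k
      have tk: "0 < tk k" "tk k \<le> 1" for k by (auto simp: tk_def)
      have tk0: "tk \<longlonglongrightarrow> 0" unfolding tk_def by (rule LIMSEQ_inverse_real_of_nat[unfolded inverse_eq_divide])
      have zk: "(\<lambda>k. u + tk k *\<^sub>R (v - u)) \<longlonglongrightarrow> u"
        using tendsto_add[OF tendsto_const tendsto_scaleR[OF tk0 tendsto_const], of u "v - u"] by simp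
      have cont: "isCont (T a) u" using T_cont[OF a_in] continuous_on_eq_continuous_at[of UNIV "T a"] by simp
      have "(\<lambda>k. T a (u + tk k *\<^sub>R (v - u))) \<longlonglongrightarrow> T a u" by (rule isCont_tendsto_compose[OF cont zk])
      hence lim: "(\<lambda>k. blinfun_apply (T a (u + tk k *\<^sub>R (v - u))) (v - u) + f v - f u)
          \<longlonglongrightarrow> blinfun_apply (T a u) (v - u) + f v - f u"
        by (intro tendsto_intros blinfun.tendsto)
      show ?thesis
        by (rule tendsto_lowerbound[OF lim]) (use key tk in auto)
    qed
    show ?thesis unfolding var_sel_def
    proof (intro CollectI conjI uK ballI)
      fix v assume v: "v \<in> K w"
      have "\<phi> v = ereal (f v)" "\<phi> u = ereal (f u)" using finC KwC[OF v] uC by auto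
      thus "ereal (blinfun_apply (T a u) (v - u)) + \<phi> v - \<phi> u \<ge> ereal (blinfun_apply m (v - u))"
        using ineq[OF v] by simp
    qed
  qed
  show ?thesis using part1 part2 by blast
qed

end
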